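(* Let $n\in\mathbb{N}$ and $1\le K\le 2^n$. For every quantum algorithm $\mathcal A$ making $T$ queries to $\varphi$ and $\varphi^{-1}$ and outputting $(x,y)\in\{0,1\}^n\times\{0,1\}^n$, if for every permutation $\varphi$ of $\{0,1\}^{2n}$ having exactly $K$ zero pairs $\mathcal A$ outputs a zero pair of $\varphi$ with probability at least $\epsilon>0$, then $$\epsilon\le\frac{8(T+1)^2K}{2^n}.$$
   Context: A zero pair of a permutation $\varphi$ of $\{0,1\}^{2n}$ is a pair $(x,y)\in\{0,1\}^n\times\{0,1\}^n$ with $\varphi(x\|0^n)=y\|0^n$. Queries are to the unitaries $O_\varphi:|a\rangle|b\rangle\mapsto|a\rangle|b\oplus\varphi(a)\rangle$ and $O_{\varphi^{-1}}:|a\rangle|b\rangle\mapsto|a\rangle|b\oplus\varphi^{-1}(a)\rangle$; the success probability is over the algorithm's internal randomness and measurements. *)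

theory Defs
  imports Complex_Main "HOL-Combinatorics.Permutations"
begin

(* Bit strings in {0,1}^k are encoded as naturals below 2^k (most significant bit first),
so the concatenation x || 0^n of x in {0,1}^n is x * 2^n.  XOR of bit strings is the
bitwise xor on nat. *)

(* Computational basis of the algorithm's register: (query register a in {0,1}^(2n),
answer register b in {0,1}^(2n), workspace w in {0..<m}). *)
type_synonym qbasis = "nat \<times> nat \<times> nat"
type_synonym qstate = "qbasis \<Rightarrow> complex"
type_synonym qop = "qbasis \<Rightarrow> qbasis \<Rightarrow> complex"

definition basis_set :: "nat \<Rightarrow> nat \<Rightarrow> qbasis set" where
  "basis_set n m = {..<2^(2*n)} \<times> {..<2^(2*n)} \<times> {..<m}"

definition is_unitary :: "qbasis set \<Rightarrow> qop \<Rightarrow> bool" where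
  "is_unitary B U \<longleftrightarrow>
     (\<forall>i\<in>B. \<forall>j\<in>B. (\<Sum>k\<in>B. cnj (U k i) * U k j) = (if i = j then 1 else 0))"

definition apply_op :: "qbasis set \<Rightarrow> qop \<Rightarrow> qstate \<Rightarrow> qstate" where
  "apply_op B U \<psi> = (\<lambda>i. if i \<in> B then (\<Sum>j\<in>B. U i j * \<psi> j) else 0)"

definition query_op :: "qbasis set \<Rightarrow> (nat \<Rightarrow> nat) \<Rightarrow> qstate \<Rightarrow> qstate" where
  "query_op B f \<psi> = (\<lambda>(a, b, w). if (a, b, w) \<in> B then \<psi> (a, xor b (f a), w) else 0)"

definition init_state :: qstate where
  "init_state = (\<lambda>i. if i = (0, 0, 0) then 1 else 0)"

(* State after the unitaries U_0, ..., U_t interleaved with t queries; query number t+1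
is to O_phi if ds t, and to O_(phi^-1) otherwise. *)
primrec run_state ::
  "nat \<Rightarrow> nat \<Rightarrow> (nat \<Rightarrow> qop) \<Rightarrow> (nat \<Rightarrow> bool) \<Rightarrow> (nat \<Rightarrow> nat) \<Rightarrow> nat \<Rightarrow> qstate" where
  "run_state n m Us ds \<phi> 0 = apply_op (basis_set n m) (Us 0) init_state"
| "run_state n m Us ds \<phi> (Suc t) =
     apply_op (basis_set n m) (Us (Suc t))
       (query_op (basis_set n m) (if ds t then \<phi> else inv \<phi>) (run_state n m Us ds \<phi> t))"

definition zero_pairs :: "nat \<Rightarrow> (nat \<Rightarrow> nat) \<Rightarrow> (nat \<times> nat) set" where
  "zero_pairs n \<phi> = {(x, y). x < 2^n \<and> y < 2^n \<and> \<phi> (x * 2^n) = y * 2^n}"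

definition success_prob ::
  "nat \<Rightarrow> nat \<Rightarrow> (nat \<Rightarrow> qop) \<Rightarrow> (nat \<Rightarrow> bool) \<Rightarrow> (qbasis \<Rightarrow> nat \<times> nat) \<Rightarrow> nat
     \<Rightarrow> (nat \<Rightarrow> nat) \<Rightarrow> real" where
  "success_prob n m Us ds out T \<phi> =
     (\<Sum>s\<in>basis_set n m. if out s \<in> zero_pairs n \<phi>
                          then (cmod (run_state n m Us ds \<phi> T s))\<^sup>2 else 0)"

end

theory Submission imports Defs "HOL-Analysis.L2_Norm" begin


definition nr :: "qbasis set \<Rightarrow> qstate \<Rightarrow> real" where
  "nr A \<psi> = L2_set (\<lambda>s. cmod (\<psi> s)) A"

lemma xor_lt: "(b::nat) < 2^k \<Longrightarrow> c < 2^k \<Longrightarrow> xor b c < 2^k"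
proof -
  assume "b < 2^k" "c < 2^k"
  then have "xor b c = take_bit k (xor b c)"
  proof -
    have "take_bit k b = b" "take_bit k c = c" using \<open>b < 2^k\<close> \<open>c < 2^k\<close>
      by (simp_all add: take_bit_nat_eq_self_iff)
    then show ?thesis by (simp add: take_bit_xor)
  qed
  also have "\<dots> < 2^k" by (rule take_bit_nat_less_exp)
  finally show ?thesis .
qed

lemma finite_B: "finite (basis_set n m)"
  by (simp add: basis_set_def)

lemma nr_sq: "(nr A \<psi>)^2 = (\<Sum>s\<in>A. (cmod (\<psi> s))^2)"
  unfolding nr_def L2_set_def by (simp add: sum_nonneg)

lemma cmod_sq_cnj: "complex_of_real ((cmod z)^2) = cnj z * z"
  by (subst complex_norm_square) (rule mult.commute)

lemma unitary_sumsq: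
  assumes U: "is_unitary B U" and fin: "finite B"
  shows "(\<Sum>i\<in>B. cnj (\<Sum>j\<in>B. U i j * \<psi> j) * (\<Sum>k\<in>B. U i k * \<psi> k))
        = (\<Sum>j\<in>B. cnj (\<psi> j) * \<psi> j)"
proof -
  have "(\<Sum>i\<in>B. cnj (\<Sum>j\<in>B. U i j * \<psi> j) * (\<Sum>k\<in>B. U i k * \<psi> k))
      = (\<Sum>i\<in>B. \<Sum>j\<in>B. \<Sum>k\<in>B. cnj (\<psi> j) * \<psi> k * (cnj (U i j) * U i k))"
    by (simp add: cnj_sum sum_distrib_left sum_distrib_right mult_ac)
  also have "\<dots> = (\<Sum>j\<in>B. \<Sum>i\<in>B. \<Sum>k\<in>B. cnj (\<psi> j) * \<psi> k * (cnj (U i j) * U i k))"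
    by (rule sum.swap)
  also have "\<dots> = (\<Sum>j\<in>B. \<Sum>k\<in>B. \<Sum>i\<in>B. cnj (\<psi> j) * \<psi> k * (cnj (U i j) * U i k))"
    by (rule sum.cong[OF refl], rule sum.swap)
  also have "\<dots> = (\<Sum>j\<in>B. \<Sum>k\<in>B. cnj (\<psi> j) * \<psi> k * (\<Sum>i\<in>B. cnj (U i j) * U i k))"
    by (simp add: sum_distrib_left)
  also have "\<dots> = (\<Sum>j\<in>B. \<Sum>k\<in>B. cnj (\<psi> j) * \<psi> k * (if j = k then 1 else 0))"
    using U unfolding is_unitary_def by (intro sum.cong refl) simp
  also have "\<dots> = (\<Sum>j\<in>B. cnj (\<psi> j) * \<psi> j)"
    using fin by (simp add: if_distrib cong: if_cong)
  finally show ?thesis .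
qed

lemma apply_op_norm:
  assumes U: "is_unitary B U" and fin: "finite B"
  shows "nr B (apply_op B U \<psi>) = nr B \<psi>"
proof -
  have "complex_of_real ((nr B (apply_op B U \<psi>))^2) = complex_of_real ((nr B \<psi>)^2)"
    unfolding nr_sq of_real_sum cmod_sq_cnj
    using unitary_sumsq[OF U fin, of \<psi>] by (simp add: apply_op_def)
  then have "(nr B (apply_op B U \<psi>))^2 = (nr B \<psi>)^2" using of_real_eq_iff by blast
  then show ?thesis by (simp add: nr_def power2_eq_iff_nonneg)
qed

lemma apply_op_diff: "apply_op B U (\<lambda>s. \<psi> s - \<phi> s) = (\<lambda>s. apply_op B U \<psi> s - apply_op B U \<phi> s)"
  by (auto simp: apply_op_def sum_subtractf right_diff_distrib)

lemma query_op_diff: "query_op B f (\<lambda>s. \<psi> s - \<phi> s) = (\<lambda>s. query_op B f \<psi> s - query_op B f \<phi> s)"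
  by (auto simp: query_op_def)

lemma nr_zero_outside:
  assumes "C \<subseteq> B" "finite B" "\<And>s. s \<in> B - C \<Longrightarrow> h s = 0"
  shows "nr B h = nr C h"
  unfolding nr_def L2_set_def
  using assms by (intro arg_cong[where f=sqrt] sum.mono_neutral_right) auto

lemma nr_mono_set:
  assumes "A \<subseteq> B" "finite B"
  shows "nr A h \<le> nr B h"
  unfolding nr_def L2_set_def
  using assms by (intro real_sqrt_le_mono sum_mono2) auto

lemma nr_diff_le: "nr A (\<lambda>s. x s - y s) \<le> nr A x + nr A y"
proof -
  have "nr A (\<lambda>s. x s - y s) \<le> L2_set (\<lambda>s. cmod (x s) + cmod (y s)) A"
    unfolding nr_def by (rule L2_set_mono) (auto simp: norm_triangle_ineq4)
  also have "\<dots> \<le> nr A x + nr A y"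
    unfolding nr_def by (rule L2_set_triangle_ineq)
  finally show ?thesis .
qed

lemma nr_add_le: "nr A (\<lambda>s. x s + y s) \<le> nr A x + nr A y"
proof -
  have "nr A (\<lambda>s. x s + y s) \<le> L2_set (\<lambda>s. cmod (x s) + cmod (y s)) A"
    unfolding nr_def by (rule L2_set_mono) (auto simp: norm_triangle_ineq)
  also have "\<dots> \<le> nr A x + nr A y"
    unfolding nr_def by (rule L2_set_triangle_ineq)
  finally show ?thesis .
qed

lemma query_norm:
  assumes f: "\<And>a. a < 2^(2*n) \<Longrightarrow> f a < 2^(2*n)"
  shows "nr (basis_set n m \<inter> {s. fst s \<in> S}) (query_op (basis_set n m) f \<psi>)
       = nr (basis_set n m \<inter> {s. fst s \<in> S}) \<psi>"
proof -
  define B where "B = basis_set n m"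
  define C where "C = B \<inter> {s. fst s \<in> S}"
  define \<sigma> where "\<sigma> = (\<lambda>(a::nat, b::nat, w::nat). (a, xor b (f a), w))"
  have inv: "\<sigma> (\<sigma> s) = s" for s
    by (cases s) (simp add: \<sigma>_def xor.assoc)
  have into: "\<sigma> s \<in> C" if "s \<in> C" for s
    using that f xor_lt by (cases s) (auto simp: \<sigma>_def C_def B_def basis_set_def)
  have bij: "bij_betw \<sigma> C C"
    by (rule bij_betw_byWitness[where f'=\<sigma>]) (use inv into in auto)
  have q: "query_op B f \<psi> s = \<psi> (\<sigma> s)" if "s \<in> C" for s
    using that by (cases s) (auto simp: query_op_def \<sigma>_def C_def)
  have "nr C (query_op B f \<psi>) = L2_set (\<lambda>s. cmod (\<psi> (\<sigma> s))) C"
    unfolding nr_def by (rule L2_set_cong) (auto simp: q)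
  also have "\<dots> = nr C \<psi>"
    unfolding nr_def L2_set_def
    using sum.reindex_bij_betw[OF bij, of "\<lambda>s. (cmod (\<psi> s))^2"] by simp
  finally show ?thesis by (simp add: B_def C_def)
qed

lemma query_norm_full:
  assumes f: "\<And>a. a < 2^(2*n) \<Longrightarrow> f a < 2^(2*n)"
  shows "nr (basis_set n m) (query_op (basis_set n m) f \<psi>) = nr (basis_set n m) \<psi>"
  using query_norm[OF f, where S=UNIV and m=m and \<psi>=\<psi>] by simp

lemma query_diff:
  assumes f: "\<And>a. a < 2^(2*n) \<Longrightarrow> f a < 2^(2*n)"
      and g: "\<And>a. a < 2^(2*n) \<Longrightarrow> g a < 2^(2*n)"
      and eq: "\<And>a. a \<notin> S \<Longrightarrow> f a = g a"
  shows "nr (basis_set n m) (\<lambda>s. query_op (basis_set n m) f \<psi> s - query_op (basis_set n m) g \<psi> s)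
       \<le> 2 * nr (basis_set n m \<inter> {s. fst s \<in> S}) \<psi>"
proof -
  define B where "B = basis_set n m"
  define C where "C = B \<inter> {s. fst s \<in> S}"
  have "nr B (\<lambda>s. query_op B f \<psi> s - query_op B g \<psi> s)
     = nr C (\<lambda>s. query_op B f \<psi> s - query_op B g \<psi> s)"
    by (rule nr_zero_outside) (auto simp: C_def B_def finite_B query_op_def eq)
  also have "\<dots> \<le> nr C (query_op B f \<psi>) + nr C (query_op B g \<psi>)"
    by (rule nr_diff_le)
  also have "\<dots> = 2 * nr C \<psi>"
    using query_norm[OF f, where S=S and m=m and \<psi>=\<psi>] query_norm[OF g, where S=S and m=m and \<psi>=\<psi>] by (simp add: B_def C_def)
  finally show ?thesis by (simp add: B_def C_def)
qed

lemma run_Suc: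
  "inv \<phi> = \<phi> \<Longrightarrow> run_state n m Us ds \<phi> (Suc t) =
     apply_op (basis_set n m) (Us (Suc t)) (query_op (basis_set n m) \<phi> (run_state n m Us ds \<phi> t))"
  by simp

lemma init_norm:
  assumes "1 \<le> m" shows "nr (basis_set n m) init_state = 1"
proof -
  have mem: "(0,0,0) \<in> basis_set n m" using assms by (simp add: basis_set_def)
  have "(nr (basis_set n m) init_state)^2 = 1"
  proof -
    have "(\<Sum>s\<in>basis_set n m. (cmod (init_state s))^2) = (\<Sum>s\<in>basis_set n m. if s = (0,0,0) then 1 else 0)"
      by (rule sum.cong) (auto simp: init_state_def)
    also have "\<dots> = 1" using finite_B[of n m] mem by simp
    finally show ?thesis unfolding nr_sq .
  qed
  moreover have "nr (basis_set n m) init_state \<ge> 0" by (simp add: nr_def)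
  ultimately show ?thesis by (smt (verit) power2_eq_1_iff)
qed

lemma run_norm:
  assumes m: "1 \<le> m" and U: "\<forall>t\<le>T. is_unitary (basis_set n m) (Us t)"
    and inv: "inv \<phi> = \<phi>" and f: "\<And>a. a < 2^(2*n) \<Longrightarrow> \<phi> a < 2^(2*n)"
  shows "t \<le> T \<Longrightarrow> nr (basis_set n m) (run_state n m Us ds \<phi> t) = 1"
proof (induction t)
  case 0
  then show ?case using apply_op_norm[OF _ finite_B] U init_norm[OF m] by simp
next
  case (Suc t)
  have "nr (basis_set n m) (run_state n m Us ds \<phi> (Suc t))
     = nr (basis_set n m) (query_op (basis_set n m) \<phi> (run_state n m Us ds \<phi> t))"
    unfolding run_Suc[OF inv] using U Suc.prems by (intro apply_op_norm finite_B) simp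
  also have "\<dots> = 1" using query_norm_full[OF f] Suc by simp
  finally show ?case .
qed

lemma hybrid:
  assumes U: "\<forall>t\<le>T. is_unitary (basis_set n m) (Us t)"
    and inv1: "inv \<phi> = \<phi>" and f1: "\<And>a. a < 2^(2*n) \<Longrightarrow> \<phi> a < 2^(2*n)"
    and inv2: "inv \<phi>' = \<phi>'" and f2: "\<And>a. a < 2^(2*n) \<Longrightarrow> \<phi>' a < 2^(2*n)"
    and eq: "\<And>a. a \<notin> S \<Longrightarrow> \<phi> a = \<phi>' a"
  shows "t \<le> T \<Longrightarrow> nr (basis_set n m) (\<lambda>s. run_state n m Us ds \<phi> t s - run_state n m Us ds \<phi>' t s)
     \<le> 2 * (\<Sum>u<t. nr (basis_set n m \<inter> {s. fst s \<in> S}) (run_state n m Us ds \<phi>' u))"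
proof (induction t)
  case 0
  then show ?case by (simp add: nr_def L2_set_def)
next
  case (Suc t)
  define B where "B = basis_set n m"
  define C where "C = B \<inter> {s. fst s \<in> S}"
  define x where "x = run_state n m Us ds \<phi> t"
  define y where "y = run_state n m Us ds \<phi>' t"
  have UU: "is_unitary B (Us (Suc t))" using U Suc by (simp add: B_def)
  have IH: "nr B (\<lambda>s. x s - y s) \<le> 2 * (\<Sum>u<t. nr C (run_state n m Us ds \<phi>' u))"
    using Suc by (simp add: B_def C_def x_def y_def)
  have "nr B (\<lambda>s. run_state n m Us ds \<phi> (Suc t) s - run_state n m Us ds \<phi>' (Suc t) s)
      = nr B (apply_op B (Us (Suc t)) (\<lambda>s. query_op B \<phi> x s - query_op B \<phi>' y s))"
    by (simp only: run_Suc[OF inv1] run_Suc[OF inv2] apply_op_diff B_def x_def y_def)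
  also have "\<dots> = nr B (\<lambda>s. query_op B \<phi> x s - query_op B \<phi>' y s)"
    by (rule apply_op_norm[OF UU]) (simp add: B_def finite_B)
  also have "\<dots> = nr B (\<lambda>s. (query_op B \<phi> x s - query_op B \<phi> y s) + (query_op B \<phi> y s - query_op B \<phi>' y s))"
    by simp
  also have "\<dots> \<le> nr B (\<lambda>s. query_op B \<phi> x s - query_op B \<phi> y s) + nr B (\<lambda>s. query_op B \<phi> y s - query_op B \<phi>' y s)"
    by (rule nr_add_le)
  also have "nr B (\<lambda>s. query_op B \<phi> x s - query_op B \<phi> y s) = nr B (\<lambda>s. x s - y s)"
    using query_norm_full[OF f1, where m=m and \<psi>="\<lambda>s. x s - y s"]
    by (simp add: query_op_diff B_def)
  also have "nr B (\<lambda>s. query_op B \<phi> y s - query_op B \<phi>' y s) \<le> 2 * nr C y"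
    unfolding B_def C_def by (rule query_diff[OF f1 f2 eq])
  finally show ?case using IH by (simp add: B_def C_def y_def)
qed

lemma disj_cs:
  assumes I: "finite I" and B: "finite B" and sub: "\<And>i. i \<in> I \<Longrightarrow> A i \<subseteq> B"
    and disj: "\<And>i j. i \<in> I \<Longrightarrow> j \<in> I \<Longrightarrow> i \<noteq> j \<Longrightarrow> A i \<inter> A j = {}"
  shows "(\<Sum>i\<in>I. nr (A i) \<psi>) \<le> sqrt (card I) * nr B \<psi>"
proof -
  have fA: "finite (A i)" if "i \<in> I" for i using sub[OF that] B finite_subset by blast
  have "(\<Sum>i\<in>I. nr (A i) \<psi>) = (\<Sum>i\<in>I. \<bar>nr (A i) \<psi>\<bar> * \<bar>1\<bar>)"
    by (simp add: nr_def)
  also have "\<dots> \<le> L2_set (\<lambda>i. nr (A i) \<psi>) I * L2_set (\<lambda>i. 1) I"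
    by (rule L2_set_mult_ineq)
  also have "L2_set (\<lambda>i. 1) I = sqrt (card I)" by (simp add: L2_set_constant)
  finally have 1: "(\<Sum>i\<in>I. nr (A i) \<psi>) \<le> L2_set (\<lambda>i. nr (A i) \<psi>) I * sqrt (card I)" .
  have "L2_set (\<lambda>i. nr (A i) \<psi>) I \<le> nr B \<psi>"
  proof -
    have "(\<Sum>i\<in>I. (nr (A i) \<psi>)^2) = (\<Sum>i\<in>I. \<Sum>s\<in>A i. (cmod (\<psi> s))^2)"
      by (simp add: nr_sq)
    also have "\<dots> = (\<Sum>s\<in>(\<Union>i\<in>I. A i). (cmod (\<psi> s))^2)"
      by (rule sum.UNION_disjoint[symmetric]) (use I fA disj in auto)
    also have "\<dots> \<le> (\<Sum>s\<in>B. (cmod (\<psi> s))^2)"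
      by (rule sum_mono2) (use B sub in auto)
    finally show ?thesis unfolding L2_set_def nr_def[of B] by (intro real_sqrt_le_mono) (simp add: nr_sq[unfolded nr_def])
  qed
  then have "L2_set (\<lambda>i. nr (A i) \<psi>) I * sqrt (card I) \<le> nr B \<psi> * sqrt (card I)"
    by (rule mult_right_mono) simp
  with 1 show ?thesis by (simp add: mult.commute)
qed

lemma success_nr:
  "success_prob n m Us ds out T \<phi> =
     (nr (basis_set n m \<inter> {s. out s \<in> zero_pairs n \<phi>}) (run_state n m Us ds \<phi> T))^2"
  unfolding success_prob_def nr_sq
  by (simp add: sum.inter_filter[OF finite_B] Collect_conj_eq[symmetric] Int_def)

lemma main_bound:
  fixes \<phi> :: "nat \<Rightarrow> nat \<Rightarrow> nat" and S :: "nat \<Rightarrow> nat set"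
  assumes M: "1 \<le> M" and m: "1 \<le> m"
    and U: "\<forall>t\<le>T. is_unitary (basis_set n m) (Us t)"
    and inv0: "inv \<phi>z = \<phi>z" and f0: "\<And>a. a < 2^(2*n) \<Longrightarrow> \<phi>z a < 2^(2*n)"
    and invi: "\<And>i. i < M \<Longrightarrow> inv (\<phi> i) = \<phi> i"
    and fi: "\<And>i a. i < M \<Longrightarrow> a < 2^(2*n) \<Longrightarrow> \<phi> i a < 2^(2*n)"
    and eq: "\<And>i a. i < M \<Longrightarrow> a \<notin> S i \<Longrightarrow> \<phi> i a = \<phi>z a"
    and Sdisj: "\<And>i j. i < M \<Longrightarrow> j < M \<Longrightarrow> i \<noteq> j \<Longrightarrow> S i \<inter> S j = {}"
    and Zdisj: "\<And>i j. i < M \<Longrightarrow> j < M \<Longrightarrow> i \<noteq> j \<Longrightarrow> zero_pairs n (\<phi> i) \<inter> zero_pairs n (\<phi> j) = {}"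
    and succ: "\<And>i. i < M \<Longrightarrow> \<epsilon> \<le> success_prob n m Us ds out T (\<phi> i)"
    and eps: "\<epsilon> > 0"
  shows "\<epsilon> \<le> (1 + 2 * real T)^2 / M"
proof -
  define B where "B = basis_set n m"
  define A where "A i = B \<inter> {s. out s \<in> zero_pairs n (\<phi> i)}" for i
  define C where "C i = B \<inter> {s. fst s \<in> S i}" for i
  define \<psi> where "\<psi> = run_state n m Us ds \<phi>z"
  have finB: "finite B" by (simp add: B_def finite_B)
  have per: "sqrt \<epsilon> \<le> nr (A i) (\<psi> T) + 2 * (\<Sum>u<T. nr (C i) (\<psi> u))" if i: "i < M" for i
  proof -
    define \<chi> where "\<chi> = run_state n m Us ds (\<phi> i) T"
    have "sqrt \<epsilon> \<le> sqrt ((nr (A i) \<chi>)^2)"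
      using succ[OF i] by (intro real_sqrt_le_mono) (simp add: success_nr A_def B_def \<chi>_def)
    also have "\<dots> = nr (A i) \<chi>" by (simp add: nr_def)
    also have "\<dots> = nr (A i) (\<lambda>s. \<psi> T s + (\<chi> s - \<psi> T s))" by simp
    also have "\<dots> \<le> nr (A i) (\<psi> T) + nr (A i) (\<lambda>s. \<chi> s - \<psi> T s)" by (rule nr_add_le)
    also have "nr (A i) (\<lambda>s. \<chi> s - \<psi> T s) \<le> nr B (\<lambda>s. \<chi> s - \<psi> T s)"
      by (rule nr_mono_set) (auto simp: A_def finB)
    also have "\<dots> \<le> 2 * (\<Sum>u<T. nr (C i) (\<psi> u))"
      unfolding B_def C_def \<chi>_def \<psi>_def
      by (rule hybrid[OF U invi[OF i] fi[OF i] inv0 f0 eq[OF i]]) auto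
    finally show ?thesis by simp
  qed
  have "M * sqrt \<epsilon> = (\<Sum>i<M. sqrt \<epsilon>)" by simp
  also have "\<dots> \<le> (\<Sum>i<M. nr (A i) (\<psi> T) + 2 * (\<Sum>u<T. nr (C i) (\<psi> u)))"
    by (rule sum_mono) (use per in auto)
  also have "\<dots> = (\<Sum>i<M. nr (A i) (\<psi> T)) + 2 * (\<Sum>u<T. \<Sum>i<M. nr (C i) (\<psi> u))"
    by (simp add: sum.distrib sum_distrib_left sum.swap[of _ "{..<T}"])
  also have "(\<Sum>i<M. nr (A i) (\<psi> T)) \<le> sqrt M * 1"
  proof -
    have "(\<Sum>i<M. nr (A i) (\<psi> T)) \<le> sqrt (card {..<M}) * nr B (\<psi> T)"
      by (rule disj_cs[OF _ finB]) (use Zdisj in \<open>auto simp: A_def\<close>)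
    also have "nr B (\<psi> T) = 1" unfolding B_def \<psi>_def using run_norm[OF m U inv0 f0, where t=T] by simp
    finally show ?thesis by simp
  qed
  also have "(\<Sum>u<T. \<Sum>i<M. nr (C i) (\<psi> u)) \<le> (\<Sum>u<T. sqrt M * 1)"
  proof (rule sum_mono)
    fix u assume u: "u \<in> {..<T}"
    have "(\<Sum>i<M. nr (C i) (\<psi> u)) \<le> sqrt (card {..<M}) * nr B (\<psi> u)"
      by (rule disj_cs[OF _ finB]) (use Sdisj in \<open>auto simp: C_def\<close>)
    also have "nr B (\<psi> u) = 1" unfolding B_def \<psi>_def using run_norm[OF m U inv0 f0, where t=u] u by simp
    finally show "(\<Sum>i<M. nr (C i) (\<psi> u)) \<le> sqrt M * 1" by simp
  qed
  finally have 1: "M * sqrt \<epsilon> \<le> sqrt M * (1 + 2 * real T)" by (simp add: algebra_simps)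
  have sM: "sqrt M > 0" using M by simp
  have "sqrt M * (sqrt M * sqrt \<epsilon>) = M * sqrt \<epsilon>"
  proof -
    have "sqrt (real M) * sqrt (real M) = real M" by simp
    then show ?thesis by (simp add: mult.assoc[symmetric])
  qed
  with 1 have "sqrt M * (sqrt M * sqrt \<epsilon>) \<le> sqrt M * (1 + 2 * real T)" by linarith
  then have 2: "sqrt M * sqrt \<epsilon> \<le> 1 + 2 * real T" using sM by simp
  then have "(sqrt M * sqrt \<epsilon>)^2 \<le> (1 + 2 * real T)^2"
    by (intro power_mono) (use eps in auto)
  then have "M * \<epsilon> \<le> (1 + 2 * real T)^2" using eps by (simp add: power_mult_distrib)
  then show ?thesis using M by (simp add: field_simps)
qed



definition phi0 :: "nat \<Rightarrow> nat \<Rightarrow> nat" where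
  "phi0 N a = (if a < N*N then (if even a then Suc a else a - 1) else a)"

definition Sblk :: "nat \<Rightarrow> nat \<Rightarrow> nat \<Rightarrow> nat set" where
  "Sblk N K i = {x*N | x. i*K \<le> x \<and> x < i*K+K} \<union> {x*N+1 | x. i*K \<le> x \<and> x < i*K+K}"

definition phii :: "nat \<Rightarrow> nat \<Rightarrow> nat \<Rightarrow> nat \<Rightarrow> nat" where
  "phii N K i a = (if a \<in> Sblk N K i then a else phi0 N a)"

lemma phi0_inv: fixes N a :: nat assumes "even N" shows "phi0 N (phi0 N a) = a"
proof -
  have "even (N*N)" using assms by simp
  show ?thesis
  proof (cases "a < N*N")
    case True
    show ?thesis
    proof (cases "even a")
      case True
      then have "Suc a < N*N" using \<open>a < N*N\<close> \<open>even (N*N)\<close>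
        by (metis Suc_lessI even_Suc)
      then show ?thesis using True \<open>a < N*N\<close> by (simp add: phi0_def)
    next
      case False
      then have "a \<noteq> 0" by (metis even_zero)
      then have "even (a - 1)" using False by simp
      then show ?thesis using False \<open>a < N*N\<close> \<open>a \<noteq> 0\<close> by (simp add: phi0_def)
    qed
  next
    case False then show ?thesis by (simp add: phi0_def)
  qed
qed

lemma phi0_range: fixes N a :: nat assumes "even N" "a < N*N" shows "phi0 N a < N*N"
proof -
  have "even (N*N)" using assms by simp
  then have "even a \<Longrightarrow> Suc a < N*N" using assms(2) by (metis Suc_lessI even_Suc)
  then show ?thesis using assms(2) unfolding phi0_def by auto
qed

lemma divmod_uniq:
  assumes "r < (N::nat)" "r' < N" "x*N + r = x'*N + r'"
  shows "x = x' \<and> r = r'"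
proof -
  have "(x*N + r) div N = x" "(x'*N + r') div N = x'" using assms(1,2) by auto
  moreover have "(x*N + r) mod N = r" "(x'*N + r') mod N = r'" using assms(1,2) by auto
  ultimately show ?thesis using assms(3) by metis
qed

lemma xN_lt: fixes x N :: nat assumes "x < N" "2 \<le> N" shows "x*N + 1 < N*N"
proof -
  have "Suc x * N \<le> N*N" using assms(1) by (intro mult_le_mono1) simp
  then have "x*N + N \<le> N*N" by simp
  then show ?thesis using assms(2) by linarith
qed

lemma phi0_xN: fixes N x :: nat assumes "even N" "2 \<le> N" "x < N"
  shows "phi0 N (x*N) = x*N+1" "phi0 N (x*N+1) = x*N"
  using xN_lt[OF assms(3,2)] assms by (auto simp: phi0_def)

lemma blk_div: fixes K i x :: nat assumes "i*K \<le> x" "x < i*K+K" shows "x div K = i"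
  using assms by (intro div_nat_eqI) (auto simp: mult.commute)

locale cons =
  fixes N K i :: nat
  assumes ev: "even N" and N2: "2 \<le> N" and blk: "i*K + K \<le> N"
begin

lemma xN_mem: assumes "x < N" shows "x*N \<in> Sblk N K i \<longleftrightarrow> i*K \<le> x \<and> x < i*K+K"
proof
  assume "x*N \<in> Sblk N K i"
  then obtain x' where x': "i*K \<le> x' \<and> x' < i*K+K" and "x*N = x'*N \<or> x*N = x'*N + 1"
    unfolding Sblk_def by blast
  then have "x*N + 0 = x'*N + 0 \<or> x*N + 0 = x'*N + 1" by simp
  then have "x = x'" using divmod_uniq[of 0 N 0 x x'] divmod_uniq[of 0 N 1 x x'] N2 by auto
  then show "i*K \<le> x \<and> x < i*K+K" using x' by simp
next
  assume "i*K \<le> x \<and> x < i*K+K"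
  then show "x*N \<in> Sblk N K i" unfolding Sblk_def by blast
qed

lemma S_img: assumes "a \<in> Sblk N K i" shows "phi0 N a \<in> Sblk N K i"
proof -
  obtain x where x: "i*K \<le> x \<and> x < i*K+K" and "a = x*N \<or> a = x*N+1"
    using assms unfolding Sblk_def by blast
  moreover have "x < N" using x blk by linarith
  ultimately show ?thesis using phi0_xN[OF ev N2] unfolding Sblk_def by auto
qed

lemma phii_inv: "phii N K i (phii N K i a) = a"
proof (cases "a \<in> Sblk N K i")
  case True then show ?thesis by (simp add: phii_def)
next
  case False
  have "phi0 N a \<notin> Sblk N K i"
  proof
    assume "phi0 N a \<in> Sblk N K i"
    then have "phi0 N (phi0 N a) \<in> Sblk N K i" by (rule S_img)
    then show False using False phi0_inv[OF ev] by simp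
  qed
  then show ?thesis using False phi0_inv[OF ev] by (simp add: phii_def)
qed

lemma phii_range: "a < N*N \<Longrightarrow> phii N K i a < N*N"
  using phi0_range[OF ev] by (simp add: phii_def)

lemma phii_fix: "\<not> a < N*N \<Longrightarrow> phii N K i a = a"
  by (simp add: phii_def phi0_def)

lemma phii_inv_eq: "inv (phii N K i) = phii N K i"
  by (rule inv_equality) (simp_all add: phii_inv)

lemma phii_permutes: "phii N K i permutes {..<N*N}"
  unfolding permutes_def
proof (intro conjI allI impI)
  fix x assume "x \<notin> {..<N*N}" then show "phii N K i x = x" by (simp add: phii_fix)
next
  fix y show "\<exists>!x. phii N K i x = y"
    by (rule ex1I[of _ "phii N K i y"]) (simp add: phii_inv, metis phii_inv)
qed

lemma zp: assumes "N = 2^n" shows "zero_pairs n (phii N K i) = (\<lambda>x. (x,x)) ` {i*K..<i*K+K}"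
proof (rule set_eqI, clarify)
  fix x y :: nat
  have N0: "0 < N" using N2 by simp
  show "(x,y) \<in> zero_pairs n (phii N K i) \<longleftrightarrow> (x,y) \<in> (\<lambda>x. (x,x)) ` {i*K..<i*K+K}"
  proof
    assume "(x,y) \<in> zero_pairs n (phii N K i)"
    then have xy: "x < N" "y < N" "phii N K i (x*N) = y*N" using assms by (auto simp: zero_pairs_def)
    show "(x,y) \<in> (\<lambda>x. (x,x)) ` {i*K..<i*K+K}"
    proof (cases "x*N \<in> Sblk N K i")
      case True
      then have "x*N = y*N" using xy by (simp add: phii_def)
      then have "x = y" using N0 by simp
      then show ?thesis using True xN_mem[OF xy(1)] by auto
    next
      case False
      then have "x*N + 1 = y*N + 0" using xy phi0_xN[OF ev N2 xy(1)] by (simp add: phii_def)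
      then show ?thesis using divmod_uniq[of 1 N 0 x y] N2 by simp
    qed
  next
    assume "(x,y) \<in> (\<lambda>x. (x,x)) ` {i*K..<i*K+K}"
    then have "y = x" "i*K \<le> x" "x < i*K+K" by auto
    moreover have "x < N" using calculation blk by linarith
    ultimately show "(x,y) \<in> zero_pairs n (phii N K i)"
      using xN_mem[of x] assms by (auto simp: zero_pairs_def phii_def)
  qed
qed

end

lemma Sblk_disj:
  fixes N K i j :: nat
  assumes N2: "2 \<le> N" and K: "1 \<le> K" and ij: "i \<noteq> j"
  shows "Sblk N K i \<inter> Sblk N K j = {}"
proof (rule ccontr)
  assume "Sblk N K i \<inter> Sblk N K j \<noteq> {}"
  then obtain a where a: "a \<in> Sblk N K i" "a \<in> Sblk N K j" by blast
  have Sr: "\<exists>x r. k*K \<le> x \<and> x < k*K+K \<and> r \<le> (1::nat) \<and> a = x*N + r" if "a \<in> Sblk N K k" for k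
  proof -
    from that have "a \<in> {x*N | x. k*K \<le> x \<and> x < k*K+K} \<or> a \<in> {x*N+1 | x. k*K \<le> x \<and> x < k*K+K}"
      unfolding Sblk_def by simp
    then show ?thesis
    proof
      assume "a \<in> {x*N | x. k*K \<le> x \<and> x < k*K+K}"
      then obtain x where "k*K \<le> x \<and> x < k*K+K" "a = x*N" by blast
      then have "k*K \<le> x \<and> x < k*K+K \<and> (0::nat) \<le> 1 \<and> a = x*N + 0" by simp
      then show ?thesis by blast
    next
      assume "a \<in> {x*N+1 | x. k*K \<le> x \<and> x < k*K+K}"
      then obtain x where "k*K \<le> x \<and> x < k*K+K" "a = x*N+1" by blast
      then have "k*K \<le> x \<and> x < k*K+K \<and> (1::nat) \<le> 1 \<and> a = x*N + 1" by simp
      then show ?thesis by blast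
    qed
  qed
  obtain x r where x: "i*K \<le> x" "x < i*K+K" "r \<le> 1" "a = x*N + r"
    using Sr[OF a(1)] by blast
  obtain x' r' where x': "j*K \<le> x'" "x' < j*K+K" "r' \<le> 1" "a = x'*N + r'"
    using Sr[OF a(2)] by blast
  have "x = x'" using divmod_uniq[of r N r' x x'] x x' N2 by auto
  then show False using blk_div[OF x(1,2)] blk_div[OF x'(1,2)] ij by simp
qed

theorem lemma4:
  fixes n K T m :: nat and \<epsilon> :: real
    and Us :: "nat \<Rightarrow> qop" and ds :: "nat \<Rightarrow> bool" and out :: "qbasis \<Rightarrow> nat \<times> nat"
  assumes "1 \<le> K" and "K \<le> 2^n"
    and "1 \<le> m"
    and "\<forall>t\<le>T. is_unitary (basis_set n m) (Us t)"
    and "\<epsilon> > 0"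
    and "\<forall>\<phi>. \<phi> permutes {..<2^(2*n)} \<and> card (zero_pairs n \<phi>) = K
              \<longrightarrow> success_prob n m Us ds out T \<phi> \<ge> \<epsilon>"
  shows "\<epsilon> \<le> 8 * (real T + 1)^2 * real K / 2^n"
proof (cases "n = 0")
  case True
  then have K1: "K = 1" using assms(1,2) by simp
  have zp: "zero_pairs n id = {(0,0)}" using True by (auto simp: zero_pairs_def)
  have "\<epsilon> \<le> success_prob n m Us ds out T id"
    using assms(6) K1 zp by (simp add: permutes_id)
  also have "\<dots> = (nr (basis_set n m \<inter> {s. out s \<in> zero_pairs n id}) (run_state n m Us ds id T))^2"
    by (rule success_nr)
  also have "\<dots> \<le> (nr (basis_set n m) (run_state n m Us ds id T))^2"
    by (intro power_mono nr_mono_set finite_B) (auto simp: nr_def)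
  also have "nr (basis_set n m) (run_state n m Us ds id T) = 1"
    by (rule run_norm[OF assms(3,4)]) simp_all
  also have "(1::real)^2 \<le> 8 * (real T + 1)^2 * real K / 2^n"
  proof -
    have "(1::real) \<le> real T + 1" by simp
    then have "(1::real) * 1 \<le> (real T + 1) * (real T + 1)" by (intro mult_mono) auto
    then have "(1::real) \<le> (real T + 1)^2" by (simp add: power2_eq_square)
    then have "(1::real) \<le> 8 * (real T + 1)^2" by linarith
    then show ?thesis using True K1 by simp
  qed
  finally show ?thesis .
next
  case False
  define N :: nat where "N = 2^n"
  define M where "M = N div K"
  have ev: "even N" using False by (simp add: N_def)
  have N2: "2 \<le> N" using False unfolding N_def
    by (metis One_nat_def Suc_leI neq0_conv power_increasing power_one_right one_le_numeral)
  have NN: "(2::nat)^(2*n) = N*N" by (simp add: N_def power_mult_distrib mult_2 power_add)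
  have K0: "0 < K" using assms(1) by simp
  have M1: "1 \<le> M" using assms(2) K0 div_greater_zero_iff[of N K] by (simp add: M_def N_def)
  have MK: "M*K \<le> N" by (simp add: M_def)
  have NMK: "N < M*K + K" using K0 unfolding M_def
    by (metis add.commute div_mult_mod_eq mod_less_divisor add_less_mono1 nat_add_left_cancel_less)
  have blk: "i*K + K \<le> N" if "i < M" for i
  proof -
    have "Suc i * K \<le> M * K" using that by (intro mult_le_mono1) simp
    then show ?thesis using MK by simp
  qed
  have C: "cons N K i" if "i < M" for i using ev N2 blk[OF that] by (simp add: cons_def)
  have inj: "inj (\<lambda>x::nat. (x,x))" by (auto simp: inj_on_def)
  have bound: "\<epsilon> \<le> (1 + 2 * real T)^2 / M"
  proof (rule main_bound[where \<phi>="phii N K" and \<phi>z="phi0 N" and S="Sblk N K"])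
    show "1 \<le> M" by (rule M1)
    show "1 \<le> m" by (rule assms(3))
    show "\<forall>t\<le>T. is_unitary (basis_set n m) (Us t)" by (rule assms(4))
    show "inv (phi0 N) = phi0 N" by (rule inv_equality) (simp_all add: phi0_inv[OF ev])
    show "\<And>a. a < 2^(2*n) \<Longrightarrow> phi0 N a < 2^(2*n)" using phi0_range[OF ev] NN by simp
    show "\<And>i. i < M \<Longrightarrow> inv (phii N K i) = phii N K i" using cons.phii_inv_eq[OF C] by simp
    show "\<And>i a. i < M \<Longrightarrow> a < 2^(2*n) \<Longrightarrow> phii N K i a < 2^(2*n)"
      using cons.phii_range[OF C] NN by simp
    show "\<And>i a. i < M \<Longrightarrow> a \<notin> Sblk N K i \<Longrightarrow> phii N K i a = phi0 N a"
      by (simp add: phii_def)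
    show "\<And>i j. i < M \<Longrightarrow> j < M \<Longrightarrow> i \<noteq> j \<Longrightarrow> Sblk N K i \<inter> Sblk N K j = {}"
      using Sblk_disj[OF N2 assms(1)] by simp
    show "\<And>i j. i < M \<Longrightarrow> j < M \<Longrightarrow> i \<noteq> j \<Longrightarrow> zero_pairs n (phii N K i) \<inter> zero_pairs n (phii N K j) = {}"
    proof -
      fix i j assume ij: "i < M" "j < M" "i \<noteq> j"
      have F: "False" if "i*K \<le> x" "x < i*K+K" "j*K \<le> x" "x < j*K+K" for x
        using blk_div[OF that(1,2)] blk_div[OF that(3,4)] ij(3) by simp
      show "zero_pairs n (phii N K i) \<inter> zero_pairs n (phii N K j) = {}"
        unfolding cons.zp[OF C[OF ij(1)] N_def] cons.zp[OF C[OF ij(2)] N_def]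
        using F by auto
    qed
    show "\<And>i. i < M \<Longrightarrow> \<epsilon> \<le> success_prob n m Us ds out T (phii N K i)"
    proof -
      fix i assume i: "i < M"
      have "card (zero_pairs n (phii N K i)) = K"
        unfolding cons.zp[OF C[OF i] N_def] by (simp add: card_image[OF inj_on_subset[OF inj]])
      moreover have "phii N K i permutes {..<2^(2*n)}" using cons.phii_permutes[OF C[OF i]] NN by simp
      ultimately show "\<epsilon> \<le> success_prob n m Us ds out T (phii N K i)" using assms(6) by blast
    qed
    show "\<epsilon> > 0" by (rule assms(5))
  qed
  have NK: "real N \<le> 2 * real K * real M"
  proof -
    have "K*1 \<le> K*M" using M1 by (rule mult_le_mono2)
    moreover have "M*K = K*M" by simp
    ultimately have "N \<le> 2*(K*M)" using NMK by linarith
    then have "N \<le> 2*K*M" by (simp add: mult.assoc)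
    then show ?thesis by (metis of_nat_le_iff of_nat_mult of_nat_numeral)
  qed
  have T4: "(1 + 2 * real T)^2 \<le> 4 * (real T + 1)^2" by (simp add: power2_eq_square algebra_simps)
  have "(1 + 2 * real T)^2 * real N \<le> 4 * (real T + 1)^2 * (2 * real K * real M)"
    by (intro mult_mono T4 NK) auto
  then have "(1 + 2 * real T)^2 / M \<le> 8 * (real T + 1)^2 * real K / N"
    using M1 N2 by (simp add: divide_simps)
  then show ?thesis using bound by (simp add: N_def)
qed


end
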